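(* If there exists a non-degenerate triangular dynamical $r$-matrix $r:\mathfrak h^*\to\wedge^2\mathfrak g$, then $\mathfrak g$ admits a reductive decomposition $\mathfrak g=\mathfrak h\oplus\mathfrak m$, i.e. a linear subspace $\mathfrak m$ complementary to $\mathfrak h$ with $[\mathfrak h,\mathfrak m]\subset\mathfrak m$.
   Context: Let $\mathfrak g$ be a finite-dimensional real Lie algebra and $\mathfrak h\subset\mathfrak g$ an abelian subalgebra with basis $h_1,\dots,h_l$; $(\lambda^i)$ are the induced coordinates on $\mathfrak h^*$. A triangular dynamical $r$-matrix is a smooth $r:\mathfrak h^*\to\wedge^2\mathfrak g$ with $[h,r(\lambda)]=0$ for $h\in\mathfrak h$ and $\sum_i h_i\wedge\frac{\partial r}{\partial\lambda^i}+\frac12[r,r]=0$ (Schouten-type bracket). It is non-degenerate if $\mathfrak h+r(\lambda)^\#\mathfrak h^\perp=\mathfrak g$ for all $\lambda$, where $\langle\rho^\#\xi,\eta\rangle=\rho(\xi,\eta)$ and $\mathfrak h^\perp\subset\mathfrak g^*$ is the annihilator of $\mathfrak h$. *)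

theory Defs
  imports "HOL-Analysis.Analysis"
begin

text \<open>A finite-dimensional real Lie algebra: the carrier is a type of class
euclidean_space (a finite-dimensional real vector space; its inner product is only
used to identify g with its dual g*), with a bilinear, alternating bracket satisfying Jacobi.\<close>

definition lie_algebra :: "('a::euclidean_space \<Rightarrow> 'a \<Rightarrow> 'a) \<Rightarrow> bool" where
  "lie_algebra br \<longleftrightarrow> bilinear br \<and> (\<forall>x. br x x = 0) \<and>
     (\<forall>x y z. br x (br y z) + br y (br z x) + br z (br x y) = 0)"

text \<open>g* is identified with g via the inner product: the covector xi acts by x |-> xi \<bullet> x.
 An element of wedge^2 g is an alternating bilinear form on g* (a function 'a => 'a => real),
 an element of wedge^3 g an alternating trilinear form on g*.\<close>

definition bivector :: "('a::euclidean_space \<Rightarrow> 'a \<Rightarrow> real) \<Rightarrow> bool" where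
  "bivector \<rho> \<longleftrightarrow> bilinear \<rho> \<and> (\<forall>\<xi> \<eta>. \<rho> \<xi> \<eta> = - \<rho> \<eta> \<xi>)"

text \<open>Sharp map: <rho# xi, eta> = rho(xi, eta).\<close>
definition sharp :: "('a::euclidean_space \<Rightarrow> 'a \<Rightarrow> real) \<Rightarrow> 'a \<Rightarrow> 'a" where
  "sharp \<rho> \<xi> = (\<Sum>b\<in>Basis. \<rho> \<xi> b *\<^sub>R b)"

text \<open>X wedge Y wedge Z, evaluated on covectors (determinant convention).\<close>
definition wedge3 :: "'a::euclidean_space \<Rightarrow> 'a \<Rightarrow> 'a \<Rightarrow> 'a \<Rightarrow> 'a \<Rightarrow> 'a \<Rightarrow> real" where
  "wedge3 X Y Z = (\<lambda>\<xi> \<eta> \<zeta>.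
      (\<xi> \<bullet> X) * ((\<eta> \<bullet> Y) * (\<zeta> \<bullet> Z) - (\<eta> \<bullet> Z) * (\<zeta> \<bullet> Y))
    - (\<eta> \<bullet> X) * ((\<xi> \<bullet> Y) * (\<zeta> \<bullet> Z) - (\<xi> \<bullet> Z) * (\<zeta> \<bullet> Y))
    + (\<zeta> \<bullet> X) * ((\<xi> \<bullet> Y) * (\<eta> \<bullet> Z) - (\<xi> \<bullet> Z) * (\<eta> \<bullet> Y)))"

definition vec_wedge_biv :: "'a::euclidean_space \<Rightarrow> ('a \<Rightarrow> 'a \<Rightarrow> real) \<Rightarrow> 'a \<Rightarrow> 'a \<Rightarrow> 'a \<Rightarrow> real" where
  "vec_wedge_biv X \<rho> = (\<lambda>\<xi> \<eta> \<zeta>.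
      (\<xi> \<bullet> X) * \<rho> \<eta> \<zeta> - (\<eta> \<bullet> X) * \<rho> \<xi> \<zeta> + (\<zeta> \<bullet> X) * \<rho> \<xi> \<eta>)"

text \<open>Schouten bracket of decomposable bivectors:
 [X wedge Y, Z wedge W] = [X,Z] Y W - [X,W] Y Z - [Y,Z] X W + [Y,W] X Z.\<close>
definition schouten_dec ::
  "('a::euclidean_space \<Rightarrow> 'a \<Rightarrow> 'a) \<Rightarrow> 'a \<Rightarrow> 'a \<Rightarrow> 'a \<Rightarrow> 'a \<Rightarrow> 'a \<Rightarrow> 'a \<Rightarrow> 'a \<Rightarrow> real" where
  "schouten_dec br X Y Z W = (\<lambda>\<xi> \<eta> \<zeta>.
       wedge3 (br X Z) Y W \<xi> \<eta> \<zeta> - wedge3 (br X W) Y Z \<xi> \<eta> \<zeta>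
     - wedge3 (br Y Z) X W \<xi> \<eta> \<zeta> + wedge3 (br Y W) X Z \<xi> \<eta> \<zeta>)"

text \<open>Schouten bracket [rho, rho] of a bivector, by bilinear extension using the
 expansion rho = 1/2 sum_{a,b} rho(a,b) a wedge b in the (orthonormal) basis.\<close>
definition schouten :: "('a::euclidean_space \<Rightarrow> 'a \<Rightarrow> 'a) \<Rightarrow> ('a \<Rightarrow> 'a \<Rightarrow> real) \<Rightarrow> 'a \<Rightarrow> 'a \<Rightarrow> 'a \<Rightarrow> real" where
  "schouten br \<rho> = (\<lambda>\<xi> \<eta> \<zeta>. (1/4) * (\<Sum>a\<in>Basis. \<Sum>b\<in>Basis. \<Sum>c\<in>Basis. \<Sum>d\<in>Basis.
       \<rho> a b * \<rho> c d * schouten_dec br a b c d \<xi> \<eta> \<zeta>))"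

text \<open>Adjoint action of x on a bivector: ad_x(X wedge Y) = [x,X] wedge Y + X wedge [x,Y];
 on forms (ad_x rho)(xi,eta) = rho(xi o ad_x, eta) + rho(xi, eta o ad_x).\<close>
definition coad :: "('a::euclidean_space \<Rightarrow> 'a \<Rightarrow> 'a) \<Rightarrow> 'a \<Rightarrow> 'a \<Rightarrow> 'a" where
  "coad br x \<xi> = (\<Sum>b\<in>Basis. (\<xi> \<bullet> br x b) *\<^sub>R b)"

definition ad_biv :: "('a::euclidean_space \<Rightarrow> 'a \<Rightarrow> 'a) \<Rightarrow> 'a \<Rightarrow> ('a \<Rightarrow> 'a \<Rightarrow> real) \<Rightarrow> 'a \<Rightarrow> 'a \<Rightarrow> real" where
  "ad_biv br x \<rho> = (\<lambda>\<xi> \<eta>. \<rho> (coad br x \<xi>) \<eta> + \<rho> \<xi> (coad br x \<eta>))"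

definition partial :: "'l::finite \<Rightarrow> (real^'l \<Rightarrow> real) \<Rightarrow> real^'l \<Rightarrow> real" where
  "partial i f x = deriv (\<lambda>t. f (x + t *\<^sub>R axis i 1)) 0"

fun C_k :: "nat \<Rightarrow> (real^'l::finite \<Rightarrow> real) \<Rightarrow> bool" where
  "C_k 0 f = continuous_on UNIV f"
| "C_k (Suc k) f = (continuous_on UNIV f \<and>
     (\<forall>i x. (\<lambda>t. f (x + t *\<^sub>R axis i 1)) field_differentiable (at 0)) \<and>
     (\<forall>i. C_k k (partial i f)))"

definition smooth_fun :: "(real^'l::finite \<Rightarrow> real) \<Rightarrow> bool" where
  "smooth_fun f \<longleftrightarrow> (\<forall>k. C_k k f)"

text \<open>h = span of the basis hb (indexed by the finite type 'l); lambda in h* is given by its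
 coordinates lambda^i = lambda(h_i), i.e. h* = real^'l. r(lambda) is a bivector on g.\<close>

definition triangular_dyn_r_matrix ::
  "('a::euclidean_space \<Rightarrow> 'a \<Rightarrow> 'a) \<Rightarrow> ('l::finite \<Rightarrow> 'a) \<Rightarrow> (real^'l \<Rightarrow> 'a \<Rightarrow> 'a \<Rightarrow> real) \<Rightarrow> bool" where
  "triangular_dyn_r_matrix br hb r \<longleftrightarrow>
     (\<forall>lam. bivector (r lam)) \<and>
     (\<forall>\<xi> \<eta>. smooth_fun (\<lambda>lam. r lam \<xi> \<eta>)) \<and>
     (\<forall>lam. \<forall>x\<in>span (range hb). ad_biv br x (r lam) = (\<lambda>\<xi> \<eta>. 0)) \<and>
     (\<forall>lam \<xi> \<eta> \<zeta>.
        (\<Sum>i\<in>UNIV. vec_wedge_biv (hb i) (\<lambda>\<xi>' \<eta>'. partial i (\<lambda>\<mu>. r \<mu> \<xi>' \<eta>') lam) \<xi> \<eta> \<zeta>)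
        + (1/2) * schouten br (r lam) \<xi> \<eta> \<zeta> = 0)"

text \<open>Non-degeneracy: h + r(lambda)# h^perp = g for all lambda, where h^perp (annihilator of h)
 is, under g* = g, the orthogonal complement of h.\<close>
definition nondegenerate_dyn ::
  "('l::finite \<Rightarrow> 'a::euclidean_space) \<Rightarrow> (real^'l \<Rightarrow> 'a \<Rightarrow> 'a \<Rightarrow> real) \<Rightarrow> bool" where
  "nondegenerate_dyn hb r \<longleftrightarrow>
     (\<forall>lam. {x + sharp (r lam) \<xi> | x \<xi>. x \<in> span (range hb) \<and> (\<forall>y\<in>span (range hb). \<xi> \<bullet> y = 0)}
           = UNIV)"

end

theory Submission
  imports Defs
begin

lemma sharp_inner:
  fixes \<rho> :: "'a::euclidean_space \<Rightarrow> 'a \<Rightarrow> real"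
  assumes "bilinear \<rho>"
  shows "sharp \<rho> \<xi> \<bullet> \<eta> = \<rho> \<xi> \<eta>"
proof -
  have lin: "linear (\<rho> \<xi>)" using assms by (simp add: bilinear_def)
  have "\<rho> \<xi> \<eta> = \<rho> \<xi> (\<Sum>b\<in>Basis. (\<eta> \<bullet> b) *\<^sub>R b)" by (simp add: euclidean_representation)
  also have "\<dots> = (\<Sum>b\<in>Basis. (\<eta> \<bullet> b) * \<rho> \<xi> b)"
    by (simp add: linear_sum[OF lin] linear_scale[OF lin])
  moreover have "sharp \<rho> \<xi> \<bullet> \<eta> = (\<Sum>b\<in>Basis. \<rho> \<xi> b * (b \<bullet> \<eta>))"
    by (simp add: sharp_def inner_sum_left)
  ultimately show ?thesis
    by (simp add: inner_commute mult.commute)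
qed

lemma coad_inner:
  fixes br :: "'a::euclidean_space \<Rightarrow> 'a \<Rightarrow> 'a"
  assumes "bilinear br"
  shows "coad br x \<eta> \<bullet> y = \<eta> \<bullet> br x y"
proof -
  have lin: "linear (br x)" using assms by (simp add: bilinear_def)
  have "br x y = br x (\<Sum>b\<in>Basis. (y \<bullet> b) *\<^sub>R b)" by (simp add: euclidean_representation)
  also have "\<dots> = (\<Sum>b\<in>Basis. (y \<bullet> b) *\<^sub>R br x b)"
    by (simp add: linear_sum[OF lin] linear_scale[OF lin])
  finally show ?thesis
    by (simp add: coad_def inner_sum_left inner_sum_right inner_commute mult.commute)
qed

lemma vec_eq_by_inner:
  fixes u v :: "'a::euclidean_space"
  assumes "\<And>\<eta>. u \<bullet> \<eta> = v \<bullet> \<eta>"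
  shows "u = v"
proof -
  have "(u - v) \<bullet> (u - v) = 0" using assms by (simp add: inner_diff_left)
  then show ?thesis by simp
qed

theorem lemma4p5:
  fixes br :: "'a::euclidean_space \<Rightarrow> 'a \<Rightarrow> 'a"
    and hb :: "'l::finite \<Rightarrow> 'a"
    and r :: "real^'l \<Rightarrow> 'a \<Rightarrow> 'a \<Rightarrow> real"
  assumes "lie_algebra br"
    and "inj hb" and "independent (range hb)"
    and "\<forall>i j. br (hb i) (hb j) = 0"
    and "triangular_dyn_r_matrix br hb r"
    and "nondegenerate_dyn hb r"
  shows "\<exists>M. subspace M \<and> span (range hb) \<inter> M = {0}
           \<and> {x + y | x y. x \<in> span (range hb) \<and> y \<in> M} = UNIV
           \<and> (\<forall>x\<in>span (range hb). \<forall>y\<in>M. br x y \<in> M)"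
proof -
  define P where "P = span (range hb)"
  define Q where "Q = {\<xi>::'a. \<forall>y\<in>P. \<xi> \<bullet> y = 0}"
  define \<rho> where "\<rho> = r 0"
  have bl: "bilinear br" using assms(1) by (simp add: lie_algebra_def)
  have biv: "bivector \<rho>" using assms(5) by (simp add: triangular_dyn_r_matrix_def \<rho>_def)
  have bil: "bilinear \<rho>" and skew: "\<And>a b. \<rho> a b = - \<rho> b a"
    using biv unfolding bivector_def by blast+
  have adz: "\<And>x. x \<in> P \<Longrightarrow> ad_biv br x \<rho> = (\<lambda>\<xi> \<eta>. 0)"
    using assms(5) by (simp add: triangular_dyn_r_matrix_def \<rho>_def P_def)
  have nd: "{x + sharp \<rho> \<xi> | x \<xi>. x \<in> P \<and> \<xi> \<in> Q} = UNIV"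
    using assms(6) unfolding nondegenerate_dyn_def P_def Q_def \<rho>_def by blast
  have si: "\<And>\<xi> \<eta>. sharp \<rho> \<xi> \<bullet> \<eta> = \<rho> \<xi> \<eta>" using sharp_inner[OF bil] .
  have linS: "linear (sharp \<rho>)"
  proof -
    have l1: "\<And>y. linear (\<lambda>x. \<rho> x y)" using bil by (simp add: bilinear_def)
    show ?thesis
    proof (rule linearI)
      fix a b :: 'a and c :: real
      show "sharp \<rho> (a + b) = sharp \<rho> a + sharp \<rho> b"
        by (rule vec_eq_by_inner) (simp add: si inner_add_left linear_add[OF l1])
      show "sharp \<rho> (c *\<^sub>R a) = c *\<^sub>R sharp \<rho> a"
        by (rule vec_eq_by_inner) (simp add: si linear_scale[OF l1])
    qed
  qed
  have subQ: "subspace Q" unfolding Q_def subspace_def by (auto simp: inner_add_left)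
  define M where "M = sharp \<rho> ` Q"
  have subM: "subspace M" unfolding M_def using linear_subspace_image[OF linS subQ] .
  have brP: "\<And>x z. x \<in> P \<Longrightarrow> z \<in> P \<Longrightarrow> br x z = 0"
  proof -
    fix x z assume x: "x \<in> P" and z: "z \<in> P"
    have lz: "\<And>u. linear (br u)" and lu: "\<And>v. linear (\<lambda>u. br u v)" using bl by (auto simp: bilinear_def)
    have A: "\<And>i. br (hb i) z = 0"
    proof -
      fix i
      show "br (hb i) z = 0" using z unfolding P_def
      proof (induction rule: span_induct)
        case step then show ?case using assms(4) by auto
      next
        case base show ?case unfolding subspace_def
          by (auto simp: linear_add[OF lz] linear_scale[OF lz] linear_0[OF lz])
      qed
    qed
    show "br x z = 0" using x unfolding P_def
    proof (induction rule: span_induct)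
      case step then show ?case using A by auto
    next
      case base show ?case unfolding subspace_def
        by (auto simp: linear_add[OF lu] linear_scale[OF lu] linear_0[OF lu])
    qed
  qed
  have inter: "P \<inter> M = {0}"
  proof
    show "{0} \<subseteq> P \<inter> M" using subM subspace_0 span_zero P_def by (auto)
  next
    show "P \<inter> M \<subseteq> {0}"
    proof
      fix x assume "x \<in> P \<inter> M"
      then obtain \<xi> where xP: "x \<in> P" and \<xi>Q: "\<xi> \<in> Q" and xe: "x = sharp \<rho> \<xi>" by (auto simp: M_def)
      have z1: "\<And>\<theta>. \<theta> \<in> Q \<Longrightarrow> \<rho> \<theta> \<xi> = 0"
      proof -
        fix \<theta> assume "\<theta> \<in> Q"
        then have "\<theta> \<bullet> x = 0" using xP by (auto simp: Q_def)
        then have "\<rho> \<xi> \<theta> = 0" using si xe by (simp add: inner_commute)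
        then show "\<rho> \<theta> \<xi> = 0" using skew by (metis neg_equal_0_iff_equal)
      qed
      obtain a \<zeta> where a: "a \<in> P" and \<zeta>: "\<zeta> \<in> Q" and dec: "\<xi> = a + sharp \<rho> \<zeta>"
        using nd by blast
      have "\<xi> \<bullet> \<xi> = \<xi> \<bullet> a + sharp \<rho> \<zeta> \<bullet> \<xi>"
        by (subst (2) dec) (simp add: inner_add_right inner_commute)
      also have "\<dots> = 0" using \<xi>Q a z1[OF \<zeta>] si by (simp add: Q_def)
      finally have "\<xi> = 0" by simp
      then show "x \<in> {0}" using xe linear_0[OF linS] by simp
    qed
  qed
  have cover: "{x + y | x y. x \<in> P \<and> y \<in> M} = UNIV"
    using nd unfolding M_def by blast
  have inv: "\<forall>x\<in>P. \<forall>y\<in>M. br x y \<in> M"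
  proof (intro ballI)
    fix x y assume xP: "x \<in> P" and "y \<in> M"
    then obtain \<xi> where \<xi>Q: "\<xi> \<in> Q" and ye: "y = sharp \<rho> \<xi>" by (auto simp: M_def)
    have ci: "\<And>\<eta> z. coad br x \<eta> \<bullet> z = \<eta> \<bullet> br x z" using coad_inner[OF bl] .
    have ad: "\<And>a b. \<rho> (coad br x a) b + \<rho> a (coad br x b) = 0"
      using adz[OF xP] unfolding ad_biv_def by meson
    have l1: "linear (\<lambda>u. \<rho> u b)" for b using bil by (simp add: bilinear_def)
    have "br x y = sharp \<rho> (- coad br x \<xi>)"
    proof (rule vec_eq_by_inner)
      fix \<eta>
      have "br x y \<bullet> \<eta> = coad br x \<eta> \<bullet> y" using ci by (simp add: inner_commute)
      also have "\<dots> = \<rho> \<xi> (coad br x \<eta>)" using si[of \<xi> "coad br x \<eta>"] ye by (simp add: inner_commute)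
      also have "\<dots> = - \<rho> (coad br x \<xi>) \<eta>" using ad[of \<xi> \<eta>] by linarith
      also have "\<dots> = \<rho> (- coad br x \<xi>) \<eta>" using linear_neg[OF l1] by simp
      also have "\<dots> = sharp \<rho> (- coad br x \<xi>) \<bullet> \<eta>" using si by simp
      finally show "br x y \<bullet> \<eta> = sharp \<rho> (- coad br x \<xi>) \<bullet> \<eta>" .
    qed
    moreover have "- coad br x \<xi> \<in> Q"
      unfolding Q_def using ci brP[OF xP] by (simp add: inner_minus_left)
    ultimately show "br x y \<in> M" unfolding M_def by blast
  qed
  show ?thesis using subM inter cover inv unfolding P_def by blast
qed

end
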